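(* Let $G$ be a digraph on $n$ vertices and let $\mathcal{P}=\{V_{ij}:i,j\in[2]\}$ be a $4$-partition of $V(G)$ with $|V_{12}|=|V_{21}|>0$. Suppose that for every $i\in[2]$ and every proper $i$-pair $\phi^i$ with respect to $\mathcal{P}$, the digraph $\mathcal{J}^i(\mathcal{P},G,\phi^i)$ contains a Hamilton cycle. Then $G$ contains a Hamilton cycle.
   Context: A $4$-partition of $V(G)$ is a family $\{V_{ij}:i,j\in[2]\}$ of pairwise disjoint (possibly empty) sets with union $V(G)$; $V_{i*}=V_{i1}\cup V_{i2}$, $V_{*i}=V_{1i}\cup V_{2i}$. Let $t=|V_{12}|=|V_{21}|$ and treat $[t]=\{1,\dots,t\}$ as a set disjoint from $V(G)$. For $i\in[2]$, a proper $i$-pair with respect to $\mathcal{P}$ is a pair $\phi^i=(\phi_{i*},\phi_{*i})$ of bijections $\phi_{i*}:[t]\cup V_{ii}\to V_{i*}$ and $\phi_{*i}:[t]\cup V_{ii}\to V_{*i}$ with $\phi_{i*}(x)=\phi_{*i}(x)=x$ for all $x\in V_{ii}$. The digraph $\mathcal{J}^i(\mathcal{P},G,\phi^i)$ has vertex set $[t]\cup V_{ii}$, and for $a,b$ in this set, $ab$ is an edge (a loop if $a=b$) iff $\phi_{i*}(a)\phi_{*i}(b)\in E(G)$. A Hamilton cycle is a directed cycle through all vertices (loops play no role). *)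

theory Defs
  imports Main
begin

(* A digraph is given by a finite vertex set V and an edge relation E \<subseteq> V \<times> V.
   A 4-partition is a map P with P i j = V_ij for i,j \<in> {1,2}. *)

definition four_partition :: "'a set \<Rightarrow> (nat \<Rightarrow> nat \<Rightarrow> 'a set) \<Rightarrow> bool" where
  "four_partition V P \<longleftrightarrow>
     (\<forall>i\<in>{1,2}. \<forall>j\<in>{1,2}. \<forall>i'\<in>{1,2}. \<forall>j'\<in>{1,2}.
        (i, j) \<noteq> (i', j') \<longrightarrow> P i j \<inter> P i' j' = {}) \<and>
     (\<Union>i\<in>{1,2}. \<Union>j\<in>{1,2}. P i j) = V"

definition row_part :: "(nat \<Rightarrow> nat \<Rightarrow> 'a set) \<Rightarrow> nat \<Rightarrow> 'a set" where
  "row_part P i = P i 1 \<union> P i 2"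

definition col_part :: "(nat \<Rightarrow> nat \<Rightarrow> 'a set) \<Rightarrow> nat \<Rightarrow> 'a set" where
  "col_part P i = P 1 i \<union> P 2 i"

(* vertex set [t] \<union> V_ii, with [t] represented by Inr 1..Inr t (disjoint from V(G)) *)
definition J_verts :: "(nat \<Rightarrow> nat \<Rightarrow> 'a set) \<Rightarrow> nat \<Rightarrow> nat \<Rightarrow> ('a + nat) set" where
  "J_verts P t i = Inr ` {1..t} \<union> Inl ` P i i"

definition proper_pair ::
  "(nat \<Rightarrow> nat \<Rightarrow> 'a set) \<Rightarrow> nat \<Rightarrow> nat \<Rightarrow> ('a + nat \<Rightarrow> 'a) \<Rightarrow> ('a + nat \<Rightarrow> 'a) \<Rightarrow> bool" where
  "proper_pair P t i f g \<longleftrightarrow>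
     bij_betw f (J_verts P t i) (row_part P i) \<and>
     bij_betw g (J_verts P t i) (col_part P i) \<and>
     (\<forall>x\<in>P i i. f (Inl x) = x \<and> g (Inl x) = x)"

definition J_edges ::
  "(nat \<Rightarrow> nat \<Rightarrow> 'a set) \<Rightarrow> nat \<Rightarrow> nat \<Rightarrow> ('a \<times> 'a) set \<Rightarrow> ('a + nat \<Rightarrow> 'a) \<Rightarrow> ('a + nat \<Rightarrow> 'a)
     \<Rightarrow> (('a + nat) \<times> ('a + nat)) set" where
  "J_edges P t i E f g =
     {(a, b). a \<in> J_verts P t i \<and> b \<in> J_verts P t i \<and> (f a, g b) \<in> E}"

(* Hamilton cycle: cyclic ordering v_0,...,v_{m-1} of all vertices (distinct),
   with edges v_k v_{k+1 mod m}.  For m \<ge> 2 loops are never used. *)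
definition hamiltonian :: "'v set \<Rightarrow> ('v \<times> 'v) set \<Rightarrow> bool" where
  "hamiltonian V E \<longleftrightarrow>
     (\<exists>vs. vs \<noteq> [] \<and> distinct vs \<and> set vs = V \<and>
        (\<forall>k<length vs. (vs ! k, vs ! ((k + 1) mod length vs)) \<in> E))"

end

theory Submission
  imports Defs
begin



lemma Suc_mod_cases: "i < m \<Longrightarrow> Suc i mod m = (if Suc i = m then 0 else Suc i)"
  by auto

lemma ham_succ:
  assumes "hamiltonian W F"
  shows "\<exists>s. (\<forall>w\<in>W. s w \<in> W \<and> (w, s w) \<in> F) \<and> inj_on s W \<and>
             (\<forall>a\<in>W. \<forall>b\<in>W. \<exists>n. (s^^n) a = b)"
proof -
  obtain ws where ws: "ws \<noteq> []" "distinct ws" "set ws = W"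
    "\<forall>k<length ws. (ws ! k, ws ! ((k + 1) mod length ws)) \<in> F"
    using assms unfolding hamiltonian_def by blast
  define m where "m = length ws"
  have m0: "m > 0" using ws(1) m_def by simp
  define idx where "idx w = (THE i. i < m \<and> ws ! i = w)" for w
  have idx: "idx (ws ! i) = i" if "i < m" for i
    unfolding idx_def using that ws(2) m_def
    by (auto intro!: the_equality simp: nth_eq_iff_index_eq)
  define s where "s w = ws ! ((idx w + 1) mod m)" for w
  have sn: "s (ws ! i) = ws ! ((i + 1) mod m)" if "i < m" for i
    using idx[OF that] s_def by simp
  have pw: "(s^^n) (ws ! i) = ws ! ((i + n) mod m)" if "i < m" for i n
  proof (induction n)
    case 0 then show ?case using that by simp
  next
    case (Suc n)
    have "(s^^Suc n) (ws ! i) = s (ws ! ((i + n) mod m))" using Suc by simp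
    also have "\<dots> = ws ! (((i + n) mod m + 1) mod m)" using sn m0 by simp
    also have "((i + n) mod m + 1) mod m = (i + Suc n) mod m" by (simp add: mod_Suc_eq)
    finally show ?case .
  qed
  have W: "w \<in> W \<Longrightarrow> \<exists>i<m. w = ws ! i" for w using ws(3) m_def by (auto simp: in_set_conv_nth)
  have A: "\<forall>w\<in>W. s w \<in> W \<and> (w, s w) \<in> F"
  proof
    fix w assume "w \<in> W"
    then obtain i where i: "i < m" "w = ws ! i" using W by blast
    show "s w \<in> W \<and> (w, s w) \<in> F"
      using i sn m0 ws(3,4) m_def by (metis nth_mem mod_less_divisor Suc_eq_plus1)
  qed
  have B: "inj_on s W"
  proof (rule inj_onI)
    fix a b assume "a \<in> W" "b \<in> W" "s a = s b"
    then obtain i j where ij: "i < m" "a = ws ! i" "j < m" "b = ws ! j" using W by blast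
    then have "ws ! ((i + 1) mod m) = ws ! ((j + 1) mod m)" using sn \<open>s a = s b\<close> by simp
    then have "(i + 1) mod m = (j + 1) mod m"
      using ws(2) m_def m0 by (simp add: nth_eq_iff_index_eq)
    then have "i = j" using ij Suc_mod_cases[of i m] Suc_mod_cases[of j m] by (auto split: if_splits)
    then show "a = b" using ij by simp
  qed
  have C: "\<forall>a\<in>W. \<forall>b\<in>W. \<exists>n. (s^^n) a = b"
  proof (intro ballI)
    fix a b assume "a \<in> W" "b \<in> W"
    then obtain i j where ij: "i < m" "a = ws ! i" "j < m" "b = ws ! j" using W by blast
    have "(i + (j + m - i)) mod m = j" using ij by simp
    then show "\<exists>n. (s^^n) a = b" using pw ij by metis
  qed
  show ?thesis using A B C by blast
qed


lemma ham_from_succ: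
  assumes "finite V" "V \<noteq> {}" and E: "\<And>v. v \<in> V \<Longrightarrow> (v, S v) \<in> E \<and> S v \<in> V"
    and inv: "\<And>A. A \<subseteq> V \<Longrightarrow> A \<noteq> {} \<Longrightarrow> (\<forall>x\<in>A. S x \<in> A) \<Longrightarrow> A = V"
  shows "hamiltonian V E"
proof -
  obtain v0 where v0: "v0 \<in> V" using assms(2) by blast
  have inV: "(S^^n) v0 \<in> V" for n
  proof (induction n)
    case 0 then show ?case using v0 by simp
  next
    case (Suc n) then show ?case using E by simp
  qed
  have "range (\<lambda>n. (S^^Suc n) v0) = V"
  proof (rule inv)
    show "range (\<lambda>n. (S^^Suc n) v0) \<subseteq> V" using inV by blast
    show "\<forall>x\<in>range (\<lambda>n. (S^^Suc n) v0). S x \<in> range (\<lambda>n. (S^^Suc n) v0)"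
    proof
      fix x assume "x \<in> range (\<lambda>n. (S^^Suc n) v0)"
      then obtain n where "x = (S^^Suc n) v0" by blast
      then have "S x = (S^^Suc (Suc n)) v0" by simp
      then show "S x \<in> range (\<lambda>n. (S^^Suc n) v0)" by blast
    qed
  qed simp
  then have "v0 \<in> range (\<lambda>n. (S^^Suc n) v0)" using v0 by simp
  then obtain n0 where n0: "(S^^Suc n0) v0 = v0" by (metis (no_types, lifting) rangeE)
  have ex: "\<exists>p. 0 < p \<and> (S^^p) v0 = v0" using n0 zero_less_Suc by blast
  define p where "p = (LEAST p. 0 < p \<and> (S^^p) v0 = v0)"
  have pp: "0 < p \<and> (S^^p) v0 = v0" unfolding p_def by (rule LeastI_ex[OF ex])
  have p: "0 < p" "(S^^p) v0 = v0" using pp by blast+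
  have pmin: "\<not> (0 < q \<and> (S^^q) v0 = v0)" if "q < p" for q
    unfolding p_def by (rule not_less_Least[of q "\<lambda>p. 0 < p \<and> (S^^p) v0 = v0"]) (use that p_def in blast)
  define vs where "vs = map (\<lambda>i. (S^^i) v0) [0..<p]"
  have dist: "distinct vs"
    unfolding vs_def distinct_map
  proof (intro conjI inj_onI)
    fix i j assume ij: "i \<in> set [0..<p]" "j \<in> set [0..<p]" "(S^^i) v0 = (S^^j) v0"
    show "i = j"
    proof (rule ccontr)
      assume "i \<noteq> j"
      then consider "i < j" | "j < i" by linarith
      then show False
      proof cases
        case 1
        have "(S^^(p - j + i)) v0 = (S^^(p-j)) ((S^^i) v0)" by (simp only: funpow_add comp_apply)
        also have "\<dots> = (S^^(p-j)) ((S^^j) v0)" using ij by simp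
        also have "\<dots> = (S^^(p-j+j)) v0" by (simp only: funpow_add comp_apply)
        also have "\<dots> = (S^^p) v0" using ij by simp
        finally show False using pmin[of "p - j + i"] p 1 ij by auto
      next
        case 2
        have "(S^^(p - i + j)) v0 = (S^^(p-i)) ((S^^j) v0)" by (simp only: funpow_add comp_apply)
        also have "\<dots> = (S^^(p-i)) ((S^^i) v0)" using ij by simp
        also have "\<dots> = (S^^(p-i+i)) v0" by (simp only: funpow_add comp_apply)
        also have "\<dots> = (S^^p) v0" using ij by simp
        finally have "(S^^(p - i + j)) v0 = v0" using p by simp
        moreover have "p - i + j < p" "0 < p - i + j" using 2 ij by auto
        ultimately show False using pmin[of "p - i + j"] by blast
      qed
    qed
  qed simp
  have "set vs = V"
  proof (rule inv)
    show "set vs \<subseteq> V" using inV vs_def by auto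
    show "set vs \<noteq> {}" using p vs_def by simp
    show "\<forall>x\<in>set vs. S x \<in> set vs"
    proof
      fix x assume "x \<in> set vs"
      then obtain i where i: "i < p" "x = (S^^i) v0" using vs_def by auto
      show "S x \<in> set vs"
      proof (cases "Suc i < p")
        case True
        have "S x = (S^^Suc i) v0" using i by simp
        moreover have "(S^^Suc i) v0 \<in> (\<lambda>x. (S ^^ x) v0) ` {0..<p}"
          using True by (intro imageI) simp
        ultimately show ?thesis using vs_def by simp
      next
        case False then have "Suc i = p" using i by simp
        have "S x = (S^^Suc i) v0" using i by simp
        then have "S x = v0" using p \<open>Suc i = p\<close> by simp
        moreover have "v0 = vs ! 0" using vs_def p by simp
        ultimately show ?thesis using vs_def p by (metis nth_mem length_map length_upt minus_nat.diff_0)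
      qed
    qed
  qed
  moreover have "\<forall>k<length vs. (vs ! k, vs ! ((k + 1) mod length vs)) \<in> E"
  proof (intro allI impI)
    fix k assume k: "k < length vs"
    then have kp: "k < p" using vs_def by simp
    have "vs ! ((k + 1) mod length vs) = S (vs ! k)"
    proof (cases "Suc k < p")
      case True then show ?thesis using kp vs_def by simp
    next
      case False then have "Suc k = p" using kp by simp
      then have "(k + 1) mod length vs = 0" using vs_def by simp
      moreover have "vs ! k = (S^^k) v0" using kp vs_def by simp
      moreover have "S ((S^^k) v0) = (S^^p) v0" using \<open>Suc k = p\<close> by (metis funpow.simps(2) comp_apply)
      ultimately show ?thesis using p vs_def by simp
    qed
    then show "(vs ! k, vs ! ((k + 1) mod length vs)) \<in> E"
      using E inV kp vs_def by simp
  qed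
  moreover have "vs \<noteq> []" using p vs_def by simp
  ultimately show ?thesis unfolding hamiltonian_def using dist by blast
qed


lemma reach_inv:
  assumes "\<forall>a\<in>W. \<forall>b\<in>W. \<exists>n. (s^^n) a = b" "\<forall>w\<in>W. s w \<in> W" "b0 \<in> W" "Q b0"
    "\<And>w. w \<in> W \<Longrightarrow> Q w \<Longrightarrow> Q (s w)" "w \<in> W"
  shows "Q w"
proof -
  obtain n where n: "(s^^n) b0 = w" using assms(1,3,6) by blast
  have "(s^^n) b0 \<in> W \<and> Q ((s^^n) b0)" for n
  proof (induction n)
    case 0 show ?case using assms(3,4) by simp
  next
    case (Suc n) then show ?case using assms(2,5) by simp
  qed
  then show ?thesis using n by blast
qed

lemma bij_sum:
  assumes "bij_betw h A B" "C \<inter> B = {}"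
  shows "bij_betw (case_sum (\<lambda>v. v) h) (Inr ` A \<union> Inl ` C) (B \<union> C)"
proof -
  have "bij_betw (case_sum (\<lambda>v. v) h) (Inr ` A) B"
    using assms(1) unfolding bij_betw_def inj_on_def by (auto simp: image_image)
  moreover have "bij_betw (case_sum (\<lambda>v. v) h) (Inl ` C) C"
    unfolding bij_betw_def inj_on_def by (auto simp: image_image)
  ultimately show ?thesis using bij_betw_combine assms(2) by blast
qed



lemma inj_funpow:
  assumes "inj_on s J" "\<forall>w\<in>J. s w \<in> J"
  shows "inj_on (s^^n) J \<and> (\<forall>w\<in>J. (s^^n) w \<in> J)"
proof (induction n)
  case 0 then show ?case by simp
next
  case (Suc n)
  have "inj_on (s \<circ> (s^^n)) J"
  proof (rule comp_inj_on)
    show "inj_on (s^^n) J" using Suc by blast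
    show "inj_on s ((s^^n) ` J)" using Suc assms by (meson image_subsetI inj_on_subset)
  qed
  then show ?case using Suc assms by (simp add: comp_def)
qed

theorem proposition5p1:
  fixes V :: "'a set" and E :: "('a \<times> 'a) set" and P :: "nat \<Rightarrow> nat \<Rightarrow> 'a set"
  assumes "finite V"
    and "E \<subseteq> V \<times> V"
    and "four_partition V P"
    and "card (P 1 2) = card (P 2 1)"
    and "card (P 1 2) > 0"
    and "\<forall>i\<in>{1,2}. \<forall>f g. proper_pair P (card (P 1 2)) i f g \<longrightarrow>
           hamiltonian (J_verts P (card (P 1 2)) i) (J_edges P (card (P 1 2)) i E f g)"
  shows "hamiltonian V E"
proof -
  define t where "t = card (P 1 2)"
  have ham: "\<And>i f g. i \<in> {1,2} \<Longrightarrow> proper_pair P t i f g \<Longrightarrow>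
     hamiltonian (J_verts P t i) (J_edges P t i E f g)"
    using assms(6) t_def by blast
  have t0: "0 < t" using assms(5) t_def by simp
  have fp: "\<forall>i\<in>{1,2}. \<forall>j\<in>{1,2}. \<forall>i'\<in>{1,2}. \<forall>j'\<in>{1,2}.
        (i, j) \<noteq> (i', j') \<longrightarrow> P i j \<inter> P i' j' = {}"
    "(\<Union>i\<in>{1,2}. \<Union>j\<in>{1,2}. P i j) = V" using assms(3) unfolding four_partition_def by blast+
  have d: "P 1 1 \<inter> P 1 2 = {}" "P 1 1 \<inter> P 2 1 = {}" "P 1 1 \<inter> P 2 2 = {}"
     "P 1 2 \<inter> P 2 1 = {}" "P 1 2 \<inter> P 2 2 = {}" "P 2 1 \<inter> P 2 2 = {}"
    using fp(1) by simp_all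
  have Vu: "V = P 1 1 \<union> P 1 2 \<union> P 2 1 \<union> P 2 2" using fp(2) by auto
  have fin: "finite (P 1 2)" "finite (P 2 1)" using assms(1) Vu by auto
  obtain h12 where h12: "bij_betw h12 {1..t} (P 1 2)"
    using ex_bij_betw_nat_finite_1[OF fin(1)] t_def by blast
  obtain h21 where h21: "bij_betw h21 {1..t} (P 2 1)"
    using ex_bij_betw_nat_finite_1[OF fin(2)] t_def assms(4) by auto
  define J1 where "J1 = J_verts P t 1"
  define J2 where "J2 = J_verts P t 2"
  have J1: "\<And>k. Inr k \<in> J1 \<longleftrightarrow> k \<in> {1..t}" "\<And>v. Inl v \<in> J1 \<longleftrightarrow> v \<in> P 1 1"
    unfolding J1_def J_verts_def by auto
  have J2: "\<And>k. Inr k \<in> J2 \<longleftrightarrow> k \<in> {1..t}" "\<And>v. Inl v \<in> J2 \<longleftrightarrow> v \<in> P 2 2"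
    unfolding J2_def J_verts_def by auto
  define f1 :: "'a + nat \<Rightarrow> 'a" where "f1 = case_sum (\<lambda>v. v) h12"
  define g1 :: "'a + nat \<Rightarrow> 'a" where "g1 = case_sum (\<lambda>v. v) h21"
  have bf1: "bij_betw f1 J1 (P 1 1 \<union> P 1 2)"
    using bij_sum[OF h12, of "P 1 1"] d unfolding f1_def J1_def J_verts_def
    by (simp add: Un_commute Int_commute)
  have bg1: "bij_betw g1 J1 (P 1 1 \<union> P 2 1)"
    using bij_sum[OF h21, of "P 1 1"] d unfolding g1_def J1_def J_verts_def
    by (simp add: Un_commute Int_commute)
  have pp1: "proper_pair P t 1 f1 g1"
    unfolding proper_pair_def row_part_def col_part_def
    using bf1 bg1 J1_def f1_def g1_def by simp
  obtain s1 where s1: "\<forall>w\<in>J1. s1 w \<in> J1 \<and> (w, s1 w) \<in> J_edges P t 1 E f1 g1" "inj_on s1 J1"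
     "\<forall>a\<in>J1. \<forall>b\<in>J1. \<exists>n. (s1^^n) a = b"
    using ham_succ[OF ham[OF _ pp1]] J1_def by auto
  have s1J: "\<forall>w\<in>J1. s1 w \<in> J1" using s1(1) by blast
  have e1: "\<And>w. w \<in> J1 \<Longrightarrow> (f1 w, g1 (s1 w)) \<in> E" using s1(1) unfolding J_edges_def by blast
  have cl1: "\<And>n d. d \<in> J1 \<Longrightarrow> (s1^^n) d \<in> J1" using inj_funpow[OF s1(2) s1J] by blast
  have exlab: "\<exists>n. 0 < n \<and> (s1^^n) d \<in> range Inr" if "d \<in> J1" for d
  proof -
    have "Inr 1 \<in> J1" using J1 t0 by simp
    moreover have "s1 d \<in> J1" using s1J that by blast
    ultimately obtain m where "(s1^^m) (s1 d) = Inr 1" using s1(3) by meson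
    then have "(s1^^Suc m) d = Inr 1" by (simp only: funpow_Suc_right comp_apply)
    then show ?thesis by blast
  qed
  define len where "len d = (LEAST n. 0 < n \<and> (s1^^n) d \<in> range Inr)" for d
  have len: "0 < len d \<and> (s1^^len d) d \<in> range Inr" if "d \<in> J1" for d
    unfolding len_def by (rule LeastI_ex[OF exlab[OF that]])
  have lenmin: "(s1^^i) d \<notin> range Inr" if "0 < i" "i < len d" for d i
    using not_less_Least[of i "\<lambda>n. 0 < n \<and> (s1^^n) d \<in> range Inr"] that len_def by auto
  have lab: "\<exists>l\<in>{1..t}. (s1^^len d) d = Inr l" if dJ: "d \<in> J1" for d
  proof -
    obtain l where l: "(s1^^len d) d = Inr l" using len[OF dJ] by blast
    then have "Inr l \<in> J1" using cl1[OF dJ, of "len d"] by simp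
    then show ?thesis using J1 l by blast
  qed
  define \<sigma> where "\<sigma> k = projr ((s1^^len (Inr k)) (Inr k))" for k
  have \<sigma>: "\<sigma> k \<in> {1..t} \<and> (s1^^len (Inr k)) (Inr k) = Inr (\<sigma> k)" if "k \<in> {1..t}" for k
  proof -
    have "Inr k \<in> J1" using J1 that by simp
    then obtain l where "l \<in> {1..t}" "(s1^^len (Inr k)) (Inr k) = Inr l" using lab by blast
    then show ?thesis unfolding \<sigma>_def by simp
  qed
  have injaux: "k = k'" if k: "k \<in> {1..t}" "k' \<in> {1..t}"
    and eq: "(s1^^len (Inr k)) (Inr k) = (s1^^len (Inr k')) (Inr k')"
    and le: "len (Inr k) \<le> len (Inr k')" for k k'
  proof -
    define n where "n = len (Inr k)"
    define n' where "n' = len (Inr k')"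
    have kJ: "Inr k \<in> J1" "Inr k' \<in> J1" using J1 k by auto
    have n0: "0 < n" using len[OF kJ(1)] n_def by simp
    have "(s1^^n') (Inr k') = (s1^^(n + (n' - n))) (Inr k')" using le n_def n'_def by simp
    also have "\<dots> = (s1^^n) ((s1^^(n' - n)) (Inr k'))" by (simp only: funpow_add comp_apply)
    finally have "(s1^^n) (Inr k) = (s1^^n) ((s1^^(n' - n)) (Inr k'))" using eq n_def n'_def by simp
    moreover have "inj_on (s1^^n) J1" using inj_funpow[OF s1(2) s1J] by blast
    ultimately have e: "Inr k = (s1^^(n' - n)) (Inr k')" using kJ cl1 by (meson inj_onD)
    show ?thesis
    proof (cases "n' - n = 0")
      case True then show ?thesis using e by simp
    next
      case False
      then have "0 < n' - n" "n' - n < len (Inr k')" using n0 n'_def by auto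
      then have "(s1^^(n' - n)) (Inr k') \<notin> range Inr" using lenmin by blast
      then show ?thesis using e by (metis rangeI)
    qed
  qed
  have inj\<sigma>: "inj_on \<sigma> {1..t}"
  proof (rule inj_onI)
    fix k k' assume k: "k \<in> {1..t}" "k' \<in> {1..t}" "\<sigma> k = \<sigma> k'"
    then have eq: "(s1^^len (Inr k)) (Inr k) = (s1^^len (Inr k')) (Inr k')" using \<sigma> by metis
    show "k = k'"
    proof (cases "len (Inr k) \<le> len (Inr k')")
      case True then show ?thesis using injaux k eq by blast
    next
      case False then show ?thesis using injaux[of k' k] k eq by simp
    qed
  qed
  have b\<sigma>: "bij_betw \<sigma> {1..t} {1..t}"
    unfolding bij_betw_def using inj\<sigma> endo_inj_surj[of "{1..t}" \<sigma>] \<sigma> by blast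
  define f2 :: "'a + nat \<Rightarrow> 'a" where "f2 = case_sum (\<lambda>v. v) (h21 \<circ> \<sigma>)"
  define g2 :: "'a + nat \<Rightarrow> 'a" where "g2 = case_sum (\<lambda>v. v) h12"
  have bf2: "bij_betw f2 J2 (P 2 1 \<union> P 2 2)"
    using bij_sum[OF bij_betw_trans[OF b\<sigma> h21], of "P 2 2"] d unfolding f2_def J2_def J_verts_def
    by (simp add: Int_commute)
  have bg2: "bij_betw g2 J2 (P 1 2 \<union> P 2 2)"
    using bij_sum[OF h12, of "P 2 2"] d unfolding g2_def J2_def J_verts_def
    by (simp add: Int_commute)
  have pp2: "proper_pair P t 2 f2 g2"
    unfolding proper_pair_def row_part_def col_part_def
    using bf2 bg2 J2_def f2_def g2_def by simp
  obtain s2 where s2: "\<forall>w\<in>J2. s2 w \<in> J2 \<and> (w, s2 w) \<in> J_edges P t 2 E f2 g2" "inj_on s2 J2"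
     "\<forall>a\<in>J2. \<forall>b\<in>J2. \<exists>n. (s2^^n) a = b"
    using ham_succ[OF ham[OF _ pp2]] J2_def by auto
  have s2J: "\<forall>w\<in>J2. s2 w \<in> J2" using s2(1) by blast
  have e2: "\<And>w. w \<in> J2 \<Longrightarrow> (f2 w, g2 (s2 w)) \<in> E" using s2(1) unfolding J_edges_def by blast
  define S where "S v = (if v \<in> P 1 1 \<union> P 1 2 then g1 (s1 (inv_into J1 f1 v))
                          else g2 (s2 (inv_into J2 f2 v)))" for v
  have S1: "S (f1 d) = g1 (s1 d)" if "d \<in> J1" for d
    using bij_betw_apply[OF bf1 that] bij_betw_inv_into_left[OF bf1 that] S_def by simp
  have S2: "S (f2 b) = g2 (s2 b)" if "b \<in> J2" for b
  proof -
    have "f2 b \<in> P 2 1 \<union> P 2 2" using bij_betw_apply[OF bf2 that] .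
    then have "f2 b \<notin> P 1 1 \<union> P 1 2" using d by blast
    then show ?thesis using bij_betw_inv_into_left[OF bf2 that] S_def by simp
  qed
  have SE: "(v, S v) \<in> E \<and> S v \<in> V" if "v \<in> V" for v
  proof -
    have "(v, S v) \<in> E"
    proof (cases "v \<in> P 1 1 \<union> P 1 2")
      case True
      then have "v \<in> f1 ` J1" using bf1 by (simp add: bij_betw_def)
      then obtain x where "x \<in> J1" "v = f1 x" by blast
      then show ?thesis using S1 e1 by simp
    next
      case False
      then have "v \<in> P 2 1 \<union> P 2 2" using Vu that by blast
      then have "v \<in> f2 ` J2" using bf2 by (simp add: bij_betw_def)
      then obtain x where "x \<in> J2" "v = f2 x" by blast
      then show ?thesis using S2 e2 by simp
    qed
    then show ?thesis using assms(2) by blast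
  qed
  have inv: "A = V" if AV: "A \<subseteq> V" and An: "A \<noteq> {}" and Ainv: "\<forall>x\<in>A. S x \<in> A" for A
  proof -
    have path: "d \<in> J1 \<Longrightarrow> f1 d \<in> A \<Longrightarrow> 0 < n \<Longrightarrow> (\<forall>i. 0 < i \<and> i < n \<longrightarrow> (s1^^i) d \<notin> range Inr)
       \<Longrightarrow> g1 ((s1^^n) d) \<in> A" for n d
    proof (induction n)
      case 0 then show ?case by simp
    next
      case (Suc n)
      show ?case
      proof (cases "n = 0")
        case True
        then show ?thesis using Suc.prems S1 Ainv by (metis funpow_0 funpow_Suc_right comp_apply)
      next
        case False
        then have ih: "g1 ((s1^^n) d) \<in> A" using Suc by simp
        define x where "x = (s1^^n) d"
        have xJ: "x \<in> J1" using cl1 Suc.prems x_def by blast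
        have "x \<notin> range Inr" using Suc.prems False x_def by simp
        then obtain w where w: "x = Inl w" by (cases x) auto
        have "f1 x = g1 x" using w f1_def g1_def by simp
        then have "S (f1 x) \<in> A" using ih x_def Ainv by simp
        then show ?thesis using S1[OF xJ] x_def by simp
      qed
    qed
    have pathlen: "g1 ((s1^^len d) d) \<in> A" if "d \<in> J1" "f1 d \<in> A" for d
      using path[OF that] len[OF that(1)] lenmin by blast
    have key: "f2 b \<in> A" if b: "b \<in> J2" "g2 b \<in> A" for b
    proof (cases b)
      case (Inl v) then show ?thesis using b f2_def g2_def by simp
    next
      case (Inr k)
      then have k: "k \<in> {1..t}" using J2 b by simp
      have "f1 (Inr k) \<in> A" using b Inr f1_def g2_def by simp
      then have "g1 ((s1^^len (Inr k)) (Inr k)) \<in> A" using pathlen J1 k by simp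
      then show ?thesis using \<sigma>[OF k] Inr f2_def g1_def by simp
    qed
    have a1: "\<exists>a\<in>A. a \<in> P 1 2 \<union> P 2 1 \<union> P 2 2"
    proof -
      obtain a where a: "a \<in> A" using An by blast
      show ?thesis
      proof (cases "a \<in> P 1 1")
        case True
        then have dJ: "Inl a \<in> J1" using J1 by simp
        have "f1 (Inl a) \<in> A" using a f1_def by simp
        then have "g1 ((s1^^len (Inl a)) (Inl a)) \<in> A" using pathlen dJ by blast
        moreover obtain l where "l \<in> {1..t}" "(s1^^len (Inl a)) (Inl a) = Inr l" using lab dJ by blast
        ultimately have "h21 l \<in> A" "h21 l \<in> P 2 1" using g1_def bij_betw_apply[OF h21] by auto
        then show ?thesis by blast
      next
        case False then show ?thesis using a AV Vu by blast
      qed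
    qed
    have start: "\<exists>b\<in>J2. g2 b \<in> A"
    proof -
      obtain a where a: "a \<in> A" "a \<in> P 1 2 \<union> P 2 1 \<union> P 2 2" using a1 by blast
      show ?thesis
      proof (cases "a \<in> P 2 1")
        case True
        then have "a \<in> f2 ` J2" using bf2 by (simp add: bij_betw_def)
        then obtain x where x: "x \<in> J2" "a = f2 x" by blast
        then have "g2 (s2 x) \<in> A" using S2 Ainv a by metis
        then show ?thesis using x s2J by blast
      next
        case False
        then have "a \<in> g2 ` J2" using bg2 a by (simp add: bij_betw_def)
        then show ?thesis using a by blast
      qed
    qed
    then obtain b0 where b0: "b0 \<in> J2" "g2 b0 \<in> A" by blast
    have allJ2: "g2 b \<in> A" if "b \<in> J2" for b
    proof (rule reach_inv[where Q = "\<lambda>b. g2 b \<in> A", OF s2(3) s2J b0 _ that])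
      fix w assume "w \<in> J2" "g2 w \<in> A"
      then have "f2 w \<in> A" using key by blast
      then show "g2 (s2 w) \<in> A" using S2 \<open>w \<in> J2\<close> Ainv by metis
    qed
    have sub2: "P 1 2 \<union> P 2 1 \<union> P 2 2 \<subseteq> A"
    proof
      fix v assume v: "v \<in> P 1 2 \<union> P 2 1 \<union> P 2 2"
      show "v \<in> A"
      proof (cases "v \<in> P 2 1")
        case True
        then have "v \<in> f2 ` J2" using bf2 by (simp add: bij_betw_def)
        then show ?thesis using key allJ2 by blast
      next
        case False
        then have "v \<in> g2 ` J2" using bg2 v by (simp add: bij_betw_def)
        then show ?thesis using allJ2 by blast
      qed
    qed
    have i1: "Inr 1 \<in> J1" using J1 t0 by simp
    have f1i: "f1 (Inr 1) \<in> A" using bij_betw_apply[OF h12, of 1] t0 sub2 f1_def by auto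
    have allJ1: "f1 d \<in> A" if "d \<in> J1" for d
    proof (rule reach_inv[where Q = "\<lambda>b. f1 b \<in> A", OF s1(3) s1J i1 f1i _ that])
      fix w assume w: "w \<in> J1" "f1 w \<in> A"
      then have sw: "s1 w \<in> J1" using s1J by blast
      show "f1 (s1 w) \<in> A"
      proof (cases "s1 w")
        case (Inl x)
        then have "f1 (s1 w) = g1 (s1 w)" using f1_def g1_def by simp
        also have "\<dots> = S (f1 w)" using S1 w by simp
        finally show ?thesis using Ainv w by simp
      next
        case (Inr k)
        then have "k \<in> {1..t}" using sw J1 by simp
        then show ?thesis using Inr f1_def bij_betw_apply[OF h12] sub2 by auto
      qed
    qed
    have "P 1 1 \<subseteq> A"
    proof
      fix v assume "v \<in> P 1 1"
      then have "Inl v \<in> J1" using J1 by simp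
      then show "v \<in> A" using allJ1 f1_def by fastforce
    qed
    then show ?thesis using sub2 Vu AV by blast
  qed
  have "V \<noteq> {}" using assms(5) Vu by auto
  then show ?thesis using ham_from_succ[OF assms(1)] SE inv by blast
qed

end
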